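(* Let $M$ and $D$ be $n\times n$ matrices with entries in $\mathbb{Z}_2$ such that $M$ is non-degenerate and $D$ is diagonal. Then $\operatorname{rk}(M+D)\ge \operatorname{rk}(M+I)/2$, where $I$ is the $n\times n$ identity matrix.
   Context: A matrix is diagonal if all its entries outside the main diagonal are $0$. Ranks are over $\mathbb{Z}_2$. *)

theory Defs
  imports "HOL-Analysis.Analysis" "HOL-Library.Z2"
begin

end

theory Submission
  imports Defs
begin

lemma bit_cases2: "(x::bit) = 0 \<or> x = 1"
  by (cases x) auto

lemma rank_add_diag:
  fixes A B :: "'a::field ^ 'n ^ 'n"
  assumes diag: "\<forall>i j. i \<noteq> j \<longrightarrow> B $ i $ j = 0"
  shows "rank (A + B) \<le> rank A + card {i. B $ i $ i \<noteq> 0}"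
proof -
  define T where "T = {i. B $ i $ i \<noteq> 0}"
  define X where "X = (\<lambda>i. axis i (1::'a)) ` T"
  obtain Ba where Ba: "Ba \<subseteq> rows A" "vec.independent Ba" "rows A \<subseteq> vec.span Ba"
      "card Ba = vec.dim (rows A)"
    using vec.basis_exists by blast
  have fBa: "finite Ba" using Ba(2) vec.finiteI_independent by blast
  have rowB: "B $ i = B $ i $ i *s axis i 1" for i
    using diag by (auto simp: vec_eq_iff axis_def)
  have "rows (A + B) \<subseteq> vec.span (Ba \<union> X)"
  proof
    fix r assume "r \<in> rows (A + B)"
    then obtain i where "r = row i (A + B)" by (auto simp: rows_def)
    moreover have "row i (A + B) = A $ i + B $ i" unfolding row_def by (rule vec_eq_iff[THEN iffD2]) simp
    ultimately have r: "r = A $ i + B $ i" by simp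
    have "A $ i \<in> rows A" unfolding rows_def row_def vec_lambda_eta by blast
    then have "A $ i \<in> vec.span (Ba \<union> X)"
      using Ba(3) vec.span_mono[of Ba "Ba \<union> X"] by blast
    moreover have "B $ i \<in> vec.span (Ba \<union> X)"
    proof (cases "B $ i $ i = 0")
      case True then show ?thesis using rowB[of i] by (simp add: vec.span_zero)
    next
      case False
      then have "axis i 1 \<in> Ba \<union> X" by (auto simp: X_def T_def)
      then show ?thesis using rowB[of i]
        by (metis vec.span_base vec.span_scale)
    qed
    ultimately show "r \<in> vec.span (Ba \<union> X)" using r vec.span_add by blast
  qed
  then have "vec.dim (rows (A + B)) \<le> card (Ba \<union> X)"
    by (rule vec.dim_le_card) (auto simp: X_def fBa)
  also have "\<dots> \<le> card Ba + card X" by (rule card_Un_le)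
  also have "card X \<le> card T" unfolding X_def by (rule card_image_le) simp
  finally show ?thesis using Ba(4) by (simp add: row_rank_def_gen T_def)
qed

theorem mainTheorem5:
  fixes M D :: "bit ^ 'n ^ 'n"
  assumes "invertible M"
    and "\<forall>i j. i \<noteq> j \<longrightarrow> D $ i $ j = 0"
  shows "real (rank (M + D)) \<ge> real (rank (M + mat 1)) / 2"
proof -
  define T where "T = {i. D $ i $ i \<noteq> 0}"
  have rM: "rank M = CARD('n)"
  proof -
    obtain N where "N ** M = mat 1" using assms(1) unfolding invertible_def by blast
    then have "vec.span (rows M) = UNIV" using matrix_left_invertible_span_rows_gen by blast
    then show ?thesis unfolding row_rank_def_gen
      by (metis vec.dim_span vec_dim_card)
  qed
  have e1: "M = (M + D) + D" by (simp add: vec_eq_iff)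
  have "rank ((M + D) + D) \<le> rank (M + D) + card T"
    using rank_add_diag[OF assms(2)] T_def by blast
  then have i1: "CARD('n) \<le> rank (M + D) + card T" using rM by (simp only: e1[symmetric])
  define D' where "D' = D + mat 1"
  have d'diag: "\<forall>i j. i \<noteq> j \<longrightarrow> D' $ i $ j = 0" using assms(2) by (simp add: D'_def mat_def)
  have e2: "M + mat 1 = (M + D) + D'" by (simp add: vec_eq_iff D'_def)
  have "{i. D' $ i $ i \<noteq> 0} = - T"
    using bit_cases2 by (auto simp: D'_def T_def mat_def)
  then have i2': "rank ((M + D) + D') \<le> rank (M + D) + card (- T)"
    using rank_add_diag[OF d'diag, of "M + D"] by (simp only:)
  have i2: "rank (M + mat 1) \<le> rank (M + D) + card (- T)"
    using i2' e2 by (simp only:)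
  have "card T + card (- T) = CARD('n)"
    by (metis card_Un_disjoint finite Compl_disjoint boolean_algebra.disj_cancel_right)
  then show ?thesis using i1 i2 by linarith
qed

end
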